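(* Let $\omega\colon\mathbf Z_+\to(0,+\infty)$ be a weight which is bounded from below, such that $\sum_{n\ge0}1/\omega(k2^n)<+\infty$ for every $k\ge3$, and such that $\mathcal T$ is bounded on $\mathcal X_\omega$. Then $\mathcal T$ is chaotic on $\mathcal X_\omega$, i.e. it is hypercyclic (has a vector with dense orbit) and its set of periodic points $\{f:\ \mathcal T^Nf=f\text{ for some }N\ge1\}$ is dense in $\mathcal X_\omega$. In particular this holds for $\omega=\omega_0$, $\omega_0(n)=(n+1)/\pi$.
   Context: $T\colon\mathbf Z_+\to\mathbf Z_+$ is the modified Collatz map: $T(n)=n/2$ for $n$ even, $T(n)=(3n+1)/2$ for $n$ odd. $\mathcal X_\omega$ is the Hilbert space of holomorphic functions $f(z)=\sum_{n\ge3}c_nz^n$ on the unit disk with $\|f\|_\omega^2=\sum_{n\ge3}|c_n|^2/\omega(n)<\infty$. $\mathcal T\sum_{n\ge3}c_nz^n=\sum_{j\ge3,\,T(j)\ge3}c_jz^{T(j)}$. $\mathcal T$ is bounded on $\mathcal X_\omega$ iff the sequences $\omega(6m)/\omega(3m)$, $\omega(6m+2)/\omega(3m+1)$, $(\omega(6m+4)+\omega(2m+1))/\omega(3m+2)$ ($m\ge1$) are bounded; this holds for $\omega_0$. *)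

theory Defs
  imports "HOL-Analysis.Analysis"
begin

definition collatzT :: "nat \<Rightarrow> nat" where
  "collatzT n = (if even n then n div 2 else (3 * n + 1) div 2)"

text \<open>The space X_omega, represented through Taylor coefficients:
  f(z) = sum_{n>=3} c_n z^n corresponds to the sequence c with c_n = 0 for n < 3.\<close>
definition Xw :: "(nat \<Rightarrow> real) \<Rightarrow> (nat \<Rightarrow> complex) set" where
  "Xw \<omega> = {c. (\<forall>n<3. c n = 0) \<and> summable (\<lambda>n. (cmod (c n))\<^sup>2 / \<omega> n)}"

definition wnorm :: "(nat \<Rightarrow> real) \<Rightarrow> (nat \<Rightarrow> complex) \<Rightarrow> real" where
  "wnorm \<omega> c = sqrt (\<Sum>n. (cmod (c n))\<^sup>2 / \<omega> n)"

definition Top :: "(nat \<Rightarrow> complex) \<Rightarrow> (nat \<Rightarrow> complex)" where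
  "Top c = (\<lambda>m. if m \<ge> 3 then (\<Sum>j\<in>{j. 3 \<le> j \<and> collatzT j = m}. c j) else 0)"

definition Top_bounded :: "(nat \<Rightarrow> real) \<Rightarrow> bool" where
  "Top_bounded \<omega> \<longleftrightarrow> (\<exists>C. \<forall>c\<in>Xw \<omega>. Top c \<in> Xw \<omega> \<and> wnorm \<omega> (Top c) \<le> C * wnorm \<omega> c)"

definition hypercyclic :: "(nat \<Rightarrow> real) \<Rightarrow> bool" where
  "hypercyclic \<omega> \<longleftrightarrow> (\<exists>f\<in>Xw \<omega>. \<forall>g\<in>Xw \<omega>. \<forall>e>0. \<exists>n. wnorm \<omega> ((Top ^^ n) f - g) < e)"

definition periodic_points_dense :: "(nat \<Rightarrow> real) \<Rightarrow> bool" where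
  "periodic_points_dense \<omega> \<longleftrightarrow>
     (\<forall>g\<in>Xw \<omega>. \<forall>e>0. \<exists>f\<in>Xw \<omega>. (\<exists>N\<ge>1. (Top ^^ N) f = f) \<and> wnorm \<omega> (f - g) < e)"

definition chaotic :: "(nat \<Rightarrow> real) \<Rightarrow> bool" where
  "chaotic \<omega> \<longleftrightarrow> hypercyclic \<omega> \<and> periodic_points_dense \<omega>"

definition omega0 :: "nat \<Rightarrow> real" where
  "omega0 n = (real n + 1) / pi"

end

theory Submission imports Defs begin

definition ev :: "nat \<Rightarrow> nat \<Rightarrow> complex" where
  "ev a = (\<lambda>m. if m = a then 1 else 0)"

definition Sop :: "(nat \<Rightarrow> complex) \<Rightarrow> nat \<Rightarrow> complex" where
  "Sop c = (\<lambda>m. if even m then c (m div 2) else 0)"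

definition van :: "(nat \<Rightarrow> complex) \<Rightarrow> bool" where
  "van c \<longleftrightarrow> (\<forall>n<3. c n = 0)"

lemma collatz_le: "1 \<le> j \<Longrightarrow> collatzT j \<le> 2 * j"
  unfolding collatzT_def by auto

lemma pre_finite: "finite {j. 3 \<le> j \<and> collatzT j = m}"
proof (rule finite_subset[of _ "{..2*m+1}"])
  show "{j. 3 \<le> j \<and> collatzT j = m} \<subseteq> {..2*m+1}"
    unfolding collatzT_def by auto
qed auto

lemma Top_add: "Top (\<lambda>m. a m + b m) = (\<lambda>m. Top a m + Top b m)"
  unfolding Top_def by (auto simp: sum.distrib)

lemma Top_scale: "Top (\<lambda>m. k * a m) = (\<lambda>m. k * Top a m)"
  unfolding Top_def by (auto simp: sum_distrib_left)

lemma Top_zero: "Top (\<lambda>m. 0) = (\<lambda>m. 0)"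
  unfolding Top_def by auto

lemma Topn_zero: "(Top ^^ n) (\<lambda>m. 0) = (\<lambda>m. 0)"
  by (induction n) (auto simp: Top_zero)

lemma Topn_add: "(Top ^^ n) (\<lambda>m. a m + b m) = (\<lambda>m. (Top ^^ n) a m + (Top ^^ n) b m)"
  by (induction n) (auto simp: Top_add)

lemma Topn_scale: "(Top ^^ n) (\<lambda>m. k * a m) = (\<lambda>m. k * (Top ^^ n) a m)"
  by (induction n) (auto simp: Top_scale)

lemma Top_minus: "Top (\<lambda>m. a m - b m) = (\<lambda>m. Top a m - Top b m)"
  unfolding Top_def by (auto simp: sum_subtractf)

lemma Topn_minus: "(Top ^^ n) (a - b) = (Top ^^ n) a - (Top ^^ n) b"
  unfolding fun_diff_def by (induction n) (auto simp: Top_minus)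

lemma Topn_sum: "finite F \<Longrightarrow> (Top ^^ n) (\<lambda>m. \<Sum>i\<in>F. f i m) = (\<lambda>m. \<Sum>i\<in>F. (Top ^^ n) (f i) m)"
proof (induction F rule: finite_induct)
  case empty
  then show ?case using Topn_zero by simp
next
  case (insert x F)
  then show ?case using Topn_add[of n "f x" "\<lambda>m. \<Sum>i\<in>F. f i m"] by simp
qed

lemma Topn_zero_mono: "(Top ^^ n) x = (\<lambda>m. 0) \<Longrightarrow> n \<le> n' \<Longrightarrow> (Top ^^ n') x = (\<lambda>m. 0)"
proof -
  assume a: "(Top ^^ n) x = (\<lambda>m. 0)" "n \<le> n'"
  then obtain d where "n' = d + n" by (metis add.commute le_Suc_ex)
  then show ?thesis using a by (simp add: funpow_add Topn_zero)
qed

lemma van_Top: "van (Top c)" unfolding van_def Top_def by auto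

lemma van_Sop: "van c \<Longrightarrow> van (Sop c)" unfolding van_def Sop_def
  by auto

lemma Top_Sop: assumes "van c" shows "Top (Sop c) = c"
proof
  fix m
  show "Top (Sop c) m = c m"
  proof (cases "m \<ge> 3")
    case True
    let ?J = "{j. 3 \<le> j \<and> collatzT j = m}"
    have in2: "2*m \<in> ?J" using True unfolding collatzT_def by auto
    have "(\<Sum>j\<in>?J. Sop c j) = Sop c (2*m) + (\<Sum>j\<in>?J-{2*m}. Sop c j)"
      using pre_finite in2 by (simp add: sum.remove)
    also have "(\<Sum>j\<in>?J-{2*m}. Sop c j) = 0"
    proof (rule sum.neutral, rule ballI)
      fix j assume "j \<in> ?J - {2*m}"
      then have "odd j" unfolding collatzT_def by (auto split: if_splits)
      then show "Sop c j = 0" unfolding Sop_def by auto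
    qed
    finally show ?thesis using True unfolding Top_def Sop_def by simp
  next
    case False then show ?thesis using assms unfolding Top_def van_def by auto
  qed
qed

lemma van_Sopn: "van c \<Longrightarrow> van ((Sop ^^ n) c)"
  by (induction n) (auto simp: van_Sop)

lemma Topn_Sopn: "van c \<Longrightarrow> (Top ^^ n) ((Sop ^^ n) c) = c"
proof (induction n arbitrary: c)
  case (Suc n)
  have "(Top ^^ Suc n) ((Sop ^^ Suc n) c) = (Top ^^ n) (Top ((Sop ^^ n) (Sop c)))"
    by (simp add: funpow_Suc_right del: funpow.simps)
  also have "(Sop ^^ n) (Sop c) = Sop ((Sop ^^ n) c)"
    by (metis funpow_Suc_right funpow.simps(2) o_apply)
  also have "(Top ^^ n) (Top (Sop ((Sop ^^ n) c))) = c" using Suc by (simp add: Top_Sop van_Sopn)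
  finally show ?case .
qed simp

lemma Topn_Sopn_ge: "van c \<Longrightarrow> n \<le> m \<Longrightarrow> (Top ^^ n) ((Sop ^^ m) c) = (Sop ^^ (m - n)) c"
proof -
  assume "van c" "n \<le> m"
  then have "(Sop ^^ m) c = (Sop ^^ n) ((Sop ^^ (m-n)) c)"
    by (metis funpow_add le_add_diff_inverse o_apply)
  then show ?thesis using Topn_Sopn van_Sopn \<open>van c\<close> by simp
qed

lemma Topn_Sopn_le: "van c \<Longrightarrow> m \<le> n \<Longrightarrow> (Top ^^ n) ((Sop ^^ m) c) = (Top ^^ (n - m)) c"
proof -
  assume "van c" "m \<le> n"
  then have "(Top ^^ n) = (Top ^^ (n-m)) o (Top ^^ m)"
    by (metis funpow_add le_add_diff_inverse2)
  then show ?thesis using Topn_Sopn \<open>van c\<close> by simp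
qed

lemma Sopn_formula: "(Sop ^^ n) c j = (if 2^n dvd j then c (j div 2^n) else 0)"
proof (induction n arbitrary: c j)
  case (Suc n)
  have "(Sop ^^ Suc n) c j = (Sop ^^ n) (Sop c) j"
    by (simp add: funpow_Suc_right del: funpow.simps)
  also have "\<dots> = (if 2^n dvd j then Sop c (j div 2^n) else 0)" by (rule Suc)
  also have "\<dots> = (if 2^Suc n dvd j then c (j div 2^Suc n) else 0)"
  proof -
    have "(2^n dvd j \<and> even (j div 2^n)) \<longleftrightarrow> 2^Suc n dvd j"
    proof
      assume "2^n dvd j \<and> even (j div 2^n)"
      then obtain q r where "j = 2^n * q" "q = 2 * r" by (auto elim!: dvdE evenE)
      then show "2^Suc n dvd j" by (simp add: mult.assoc mult.left_commute)
    next
      assume "2^Suc n dvd j"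
      then obtain r where r: "j = 2^Suc n * r" by (auto elim!: dvdE)
      then have "j = 2^n * (2 * r)" by (simp add: mult.assoc mult.left_commute)
      then show "2^n dvd j \<and> even (j div 2^n)" by simp
    qed
    moreover have "j div 2^n div 2 = j div 2^Suc n" by (metis div_mult2_eq power_Suc2)
    ultimately show ?thesis unfolding Sop_def by auto
  qed
  finally show ?case .
qed simp

lemma Top_ev: assumes "3 \<le> a"
  shows "Top (ev a) = (if 3 \<le> collatzT a then ev (collatzT a) else (\<lambda>m. 0))"
proof
  fix m
  have "(\<Sum>j\<in>{j. 3 \<le> j \<and> collatzT j = m}. ev a j) = (if collatzT a = m then 1 else 0)"
    using pre_finite[of m] assms unfolding ev_def by (simp add: sum.delta')
  then show "Top (ev a) m = (if 3 \<le> collatzT a then ev (collatzT a) else (\<lambda>m. 0)) m"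
    unfolding Top_def by (auto simp: ev_def)
qed


lemma bounded_partials:
  fixes h :: "nat \<Rightarrow> real"
  assumes "\<And>N. sqrt (\<Sum>n<N. (h n)^2) \<le> B"
  shows "summable (\<lambda>n. (h n)^2) \<and> sqrt (\<Sum>n. (h n)^2) \<le> B"
proof -
  have B0: "0 \<le> B" using assms[of 0] by simp
  have p: "(\<Sum>n<N. (h n)^2) \<le> B^2" for N
  proof -
    have "sqrt (\<Sum>n<N. (h n)^2) \<le> sqrt (B^2)" using assms[of N] B0 by simp
    then show ?thesis by (subst (asm) real_sqrt_le_iff) 
  qed
  have s: "summable (\<lambda>n. (h n)^2)" by (rule summableI_nonneg_bounded[OF _ p]) simp
  have "(\<Sum>n. (h n)^2) \<le> B^2" by (rule suminf_le_const[OF s p])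
  then have "sqrt (\<Sum>n. (h n)^2) \<le> sqrt (B^2)" by (rule real_sqrt_le_mono)
  also have "sqrt (B^2) = B" using B0 by simp
  finally show ?thesis using s by simp
qed

locale W =
  fixes \<omega> :: "nat \<Rightarrow> real" and c0 :: real
  assumes pos: "\<And>n. 1 \<le> n \<Longrightarrow> 0 < \<omega> n"
    and c0: "0 < c0" and lb: "\<And>n. 1 \<le> n \<Longrightarrow> c0 \<le> \<omega> n"
    and sm: "\<And>k. 3 \<le> k \<Longrightarrow> summable (\<lambda>n. 1 / \<omega> (k * 2 ^ n))"
begin

definition r :: "(nat \<Rightarrow> complex) \<Rightarrow> nat \<Rightarrow> real" where
  "r c n = (if n = 0 then 0 else cmod (c n) / sqrt (\<omega> n))"

lemma r_nonneg: "0 \<le> r c n"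
  unfolding r_def by (cases "n = 0") (auto intro!: divide_nonneg_pos pos)

lemma sq_r: "van c \<Longrightarrow> (cmod (c n))^2 / \<omega> n = (r c n)^2"
proof (cases "n = 0")
  case True
  assume "van c" then show ?thesis using True unfolding van_def r_def by auto
next
  case False
  then have "0 < \<omega> n" using pos by simp
  then show ?thesis unfolding r_def using False by (simp add: power_divide)
qed

lemma Xw_iff: "c \<in> Xw \<omega> \<longleftrightarrow> van c \<and> summable (\<lambda>n. (r c n)^2)"
proof -
  have "van c \<Longrightarrow> (\<lambda>n. (cmod (c n))^2 / \<omega> n) = (\<lambda>n. (r c n)^2)" using sq_r by auto
  then show ?thesis unfolding Xw_def van_def[symmetric] by auto
qed

lemma wnorm_r: "van c \<Longrightarrow> wnorm \<omega> c = sqrt (\<Sum>n. (r c n)^2)"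
  unfolding wnorm_def using sq_r by simp

lemma Xw_van: "c \<in> Xw \<omega> \<Longrightarrow> van c" using Xw_iff by auto

lemma wnorm_nonneg: "c \<in> Xw \<omega> \<Longrightarrow> 0 \<le> wnorm \<omega> c"
  by (auto simp: wnorm_r Xw_iff intro!: suminf_nonneg)

lemma partial_le:
  assumes "c \<in> Xw \<omega>" shows "sqrt (\<Sum>n<N. (r c n)^2) \<le> wnorm \<omega> c"
proof -
  have "(\<Sum>n<N. (r c n)^2) \<le> (\<Sum>n. (r c n)^2)"
    using assms by (intro sum_le_suminf) (auto simp: Xw_iff)
  then show ?thesis using wnorm_r Xw_van assms by simp
qed

lemma coord_le:
  assumes "c \<in> Xw \<omega>" "1 \<le> m" shows "cmod (c m) \<le> sqrt (\<omega> m) * wnorm \<omega> c"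
proof -
  have "sqrt (\<Sum>n<Suc m. (r c n)^2) \<le> wnorm \<omega> c" by (rule partial_le[OF assms(1)])
  moreover have "(r c m)^2 \<le> (\<Sum>n<Suc m. (r c n)^2)"
    by (rule member_le_sum) auto
  ultimately have "r c m \<le> wnorm \<omega> c"
    by (metis r_nonneg real_sqrt_le_iff real_sqrt_abs abs_of_nonneg order_trans)
  moreover have "0 < sqrt (\<omega> m)" using pos assms by simp
  ultimately show ?thesis unfolding r_def using assms(2) by (simp add: divide_le_eq mult.commute)
qed

lemma tri:
  assumes "a \<in> Xw \<omega>" "b \<in> Xw \<omega>" "van h" "\<And>n. cmod (h n) \<le> cmod (a n) + cmod (b n)"
  shows "h \<in> Xw \<omega> \<and> wnorm \<omega> h \<le> wnorm \<omega> a + wnorm \<omega> b"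
proof -
  have hb: "r h n \<le> r a n + r b n" for n
    using assms(4)[of n] pos[of n] unfolding r_def
    by (cases "n = 0") (auto simp: add_divide_distrib[symmetric] intro!: divide_right_mono)
  have "sqrt (\<Sum>n<N. (r h n)^2) \<le> wnorm \<omega> a + wnorm \<omega> b" for N
  proof -
    have "sqrt (\<Sum>n<N. (r h n)^2) = L2_set (r h) {..<N}" by (simp add: L2_set_def)
    also have "\<dots> \<le> L2_set (\<lambda>n. r a n + r b n) {..<N}"
      by (rule L2_set_mono) (auto simp: hb r_nonneg)
    also have "\<dots> \<le> L2_set (r a) {..<N} + L2_set (r b) {..<N}" by (rule L2_set_triangle_ineq)
    also have "\<dots> \<le> wnorm \<omega> a + wnorm \<omega> b"
      using partial_le[OF assms(1), of N] partial_le[OF assms(2), of N] by (simp add: L2_set_def)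
    finally show ?thesis .
  qed
  from bounded_partials[OF this] assms(3) show ?thesis by (simp add: Xw_iff wnorm_r)
qed

lemma scale:
  assumes "a \<in> Xw \<omega>" "van h" "0 \<le> K" "\<And>n. cmod (h n) \<le> K * cmod (a n)"
  shows "h \<in> Xw \<omega> \<and> wnorm \<omega> h \<le> K * wnorm \<omega> a"
proof -
  have hb: "r h n \<le> K * r a n" for n
    using assms(4)[of n] pos[of n] unfolding r_def
    by (cases "n = 0") (auto simp: intro!: divide_right_mono)
  have "sqrt (\<Sum>n<N. (r h n)^2) \<le> K * wnorm \<omega> a" for N
  proof -
    have "sqrt (\<Sum>n<N. (r h n)^2) = L2_set (r h) {..<N}" by (simp add: L2_set_def)
    also have "\<dots> \<le> L2_set (\<lambda>n. K * r a n) {..<N}"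
      by (rule L2_set_mono) (auto simp: hb r_nonneg)
    also have "\<dots> = K * L2_set (r a) {..<N}" using assms(3) by (simp add: L2_set_right_distrib)
    also have "\<dots> \<le> K * wnorm \<omega> a"
      using partial_le[OF assms(1), of N] assms(3) by (simp add: L2_set_def mult_left_mono)
    finally show ?thesis .
  qed
  from bounded_partials[OF this] assms(2) show ?thesis by (simp add: Xw_iff wnorm_r)
qed

lemma Xw_add: "a \<in> Xw \<omega> \<Longrightarrow> b \<in> Xw \<omega> \<Longrightarrow> (\<lambda>m. a m + b m) \<in> Xw \<omega> \<and> wnorm \<omega> (\<lambda>m. a m + b m) \<le> wnorm \<omega> a + wnorm \<omega> b"
  by (rule tri) (auto simp: van_def Xw_iff norm_triangle_ineq)

lemma Xw_diff: "a \<in> Xw \<omega> \<Longrightarrow> b \<in> Xw \<omega> \<Longrightarrow> a - b \<in> Xw \<omega> \<and> wnorm \<omega> (a - b) \<le> wnorm \<omega> a + wnorm \<omega> b"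
  by (rule tri) (auto simp: van_def Xw_iff norm_triangle_ineq4)

lemma Xw_diff3: "a \<in> Xw \<omega> \<Longrightarrow> b \<in> Xw \<omega> \<Longrightarrow> c \<in> Xw \<omega> \<Longrightarrow> wnorm \<omega> (a - c) \<le> wnorm \<omega> (a - b) + wnorm \<omega> (b - c)"
  using Xw_diff[of a b] Xw_diff[of b c]
  by (intro conjunct2[OF tri]) (auto simp: van_def Xw_iff intro: order_trans[OF _ norm_triangle_ineq] )

lemma Xw_mult: "a \<in> Xw \<omega> \<Longrightarrow> (\<lambda>m. k * a m) \<in> Xw \<omega> \<and> wnorm \<omega> (\<lambda>m. k * a m) \<le> cmod k * wnorm \<omega> a"
  by (rule scale) (auto simp: van_def Xw_iff norm_mult)

lemma Xw_sum:
  assumes "finite F" "\<And>i. i \<in> F \<Longrightarrow> u i \<in> Xw \<omega>"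
  shows "(\<lambda>m. \<Sum>i\<in>F. u i m) \<in> Xw \<omega> \<and> wnorm \<omega> (\<lambda>m. \<Sum>i\<in>F. u i m) \<le> (\<Sum>i\<in>F. wnorm \<omega> (u i))"
  using assms
proof (induction F rule: finite_induct)
  case empty
  have "(\<lambda>m. 0::complex) \<in> Xw \<omega>" by (simp add: Xw_def)
  moreover have "wnorm \<omega> (\<lambda>m. 0) = 0" by (simp add: wnorm_def)
  ultimately show ?case by simp
next
  case (insert x F)
  then have "(\<lambda>m. \<Sum>i\<in>F. u i m) \<in> Xw \<omega>" "u x \<in> Xw \<omega>" by auto
  from Xw_add[OF this(2,1)] insert show ?case by auto
qed

lemma finsupp:
  assumes "van c" "\<And>m. M \<le> m \<Longrightarrow> c m = 0"
  shows "c \<in> Xw \<omega> \<and> wnorm \<omega> c = sqrt (\<Sum>m<M. (cmod (c m))^2 / \<omega> m)"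
proof -
  have "(\<lambda>m. (cmod (c m))^2 / \<omega> m) sums (\<Sum>m<M. (cmod (c m))^2 / \<omega> m)"
    by (rule sums_finite) (auto simp: assms(2))
  then show ?thesis using assms(1) unfolding Xw_def wnorm_def van_def by (auto simp: sums_iff)
qed


lemma Xw_suminf:
  assumes u: "\<And>k. u k \<in> Xw \<omega>" and s: "summable (\<lambda>k. wnorm \<omega> (u k))"
  shows "(\<forall>m. summable (\<lambda>k. u k m)) \<and> (\<lambda>m. \<Sum>k. u k m) \<in> Xw \<omega>
         \<and> wnorm \<omega> (\<lambda>m. \<Sum>k. u k m) \<le> (\<Sum>k. wnorm \<omega> (u k))"
proof -
  have ps: "summable (\<lambda>k. u k m)" for m
  proof (cases "m = 0")
    case True
    then have "u k m = 0" for k using Xw_van[OF u[of k]] by (simp add: van_def)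
    then show ?thesis by simp
  next
    case False
    show ?thesis
    proof (rule summable_comparison_test)
      show "\<exists>N. \<forall>n\<ge>N. norm (u n m) \<le> sqrt (\<omega> m) * wnorm \<omega> (u n)"
        using coord_le[OF u] False by auto
      show "summable (\<lambda>n. sqrt (\<omega> m) * wnorm \<omega> (u n))" using s by (rule summable_mult)
    qed
  qed
  define F where "F = (\<lambda>m. \<Sum>k. u k m)"
  have vF: "van F" unfolding F_def van_def using Xw_van[OF u] by (auto simp: van_def)
  define B where "B = (\<Sum>k. wnorm \<omega> (u k))"
  define P where "P K = (\<lambda>m. \<Sum>k<K. u k m)" for K
  have PB: "P K \<in> Xw \<omega> \<and> wnorm \<omega> (P K) \<le> B" for K
  proof -
    have a: "P K \<in> Xw \<omega> \<and> wnorm \<omega> (P K) \<le> (\<Sum>k<K. wnorm \<omega> (u k))"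
      unfolding P_def by (rule Xw_sum) (auto simp: u)
    have "(\<Sum>k<K. wnorm \<omega> (u k)) \<le> B" unfolding B_def
      by (rule sum_le_suminf[OF s]) (auto intro: wnorm_nonneg u)
    with a show ?thesis by auto
  qed
  have bd: "sqrt (\<Sum>m<M. (r F m)^2) \<le> B" for M
  proof (rule Lim_bounded)
    show "(\<lambda>K. sqrt (\<Sum>m<M. (r (P K) m)^2)) \<longlonglongrightarrow> sqrt (\<Sum>m<M. (r F m)^2)"
    proof (intro tendsto_intros)
      fix m
      show "(\<lambda>K. r (P K) m) \<longlonglongrightarrow> r F m"
      proof (cases "m = 0")
        case True then show ?thesis by (simp add: r_def)
      next
        case False
        have "(\<lambda>K. P K m) \<longlonglongrightarrow> F m" unfolding P_def F_def by (rule summable_LIMSEQ[OF ps])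
        then have "(\<lambda>K. cmod (P K m) / sqrt (\<omega> m)) \<longlonglongrightarrow> cmod (F m) / sqrt (\<omega> m)"
          using pos[of m] False by (intro tendsto_intros) auto
        then show ?thesis using False by (simp add: r_def)
      qed
    qed
    show "\<forall>K\<ge>0. sqrt (\<Sum>m<M. (r (P K) m)^2) \<le> B"
      using partial_le PB order_trans by blast
  qed
  from bounded_partials[OF bd] vF show ?thesis
    using ps unfolding F_def B_def by (simp add: Xw_iff wnorm_r)
qed

end

lemma Top_suminf:
  assumes "\<And>m. summable (\<lambda>k. u k m)"
  shows "Top (\<lambda>m. \<Sum>k. u k m) = (\<lambda>m. \<Sum>k. Top (u k) m) \<and> (\<forall>m. summable (\<lambda>k. Top (u k) m))"
proof
  show "Top (\<lambda>m. \<Sum>k. u k m) = (\<lambda>m. \<Sum>k. Top (u k) m)"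
  proof
    fix m
    show "Top (\<lambda>m. \<Sum>k. u k m) m = (\<Sum>k. Top (u k) m)"
      unfolding Top_def using assms by (auto simp: suminf_sum)
  qed
  show "\<forall>m. summable (\<lambda>k. Top (u k) m)"
  proof
    fix m show "summable (\<lambda>k. Top (u k) m)"
      by (cases "3 \<le> m") (auto simp: Top_def intro!: summable_sum assms)
  qed
qed

lemma Topn_suminf:
  assumes "\<And>m. summable (\<lambda>k. u k m)"
  shows "(Top ^^ n) (\<lambda>m. \<Sum>k. u k m) = (\<lambda>m. \<Sum>k. (Top ^^ n) (u k) m) \<and> (\<forall>m. summable (\<lambda>k. (Top ^^ n) (u k) m))"
proof (induction n)
  case 0 then show ?case using assms by simp
next
  case (Suc n)
  then have "(Top ^^ Suc n) (\<lambda>m. \<Sum>k. u k m) = Top (\<lambda>m. \<Sum>k. (Top ^^ n) (u k) m)" by simp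
  with Top_suminf[of "\<lambda>k. (Top ^^ n) (u k)"] Suc show ?case by simp
qed


definition Kf :: "(nat \<Rightarrow> complex) set" where
  "Kf = {x. van x \<and> (\<exists>M. \<forall>m\<ge>M. x m = 0) \<and> (\<exists>N. (Top ^^ N) x = (\<lambda>m. 0))}"

lemma Kf_add: "x \<in> Kf \<Longrightarrow> y \<in> Kf \<Longrightarrow> (\<lambda>m. x m + y m) \<in> Kf"
proof -
  assume x: "x \<in> Kf" and y: "y \<in> Kf"
  then obtain M1 M2 N1 N2 where a: "\<forall>m\<ge>M1. x m = 0" "\<forall>m\<ge>M2. y m = 0"
    "(Top ^^ N1) x = (\<lambda>m. 0)" "(Top ^^ N2) y = (\<lambda>m. 0)" unfolding Kf_def by auto
  have "(Top ^^ max N1 N2) x = (\<lambda>m. 0)" by (rule Topn_zero_mono[OF a(3)]) simp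
  moreover have "(Top ^^ max N1 N2) y = (\<lambda>m. 0)" by (rule Topn_zero_mono[OF a(4)]) simp
  ultimately have "(Top ^^ max N1 N2) (\<lambda>m. x m + y m) = (\<lambda>m. 0)" by (simp add: Topn_add)
  moreover have "\<forall>m\<ge>max M1 M2. x m + y m = 0" using a(1,2) by simp
  moreover have "van (\<lambda>m. x m + y m)" using x y unfolding Kf_def van_def by simp
  ultimately show ?thesis unfolding Kf_def mem_Collect_eq by (intro conjI exI)
qed

lemma Kf_mult: "x \<in> Kf \<Longrightarrow> (\<lambda>m. k * x m) \<in> Kf"
proof -
  assume "x \<in> Kf"
  then obtain M N where a: "van x" "\<forall>m\<ge>M. x m = 0" "(Top ^^ N) x = (\<lambda>m. 0)" unfolding Kf_def by auto
  have "(Top ^^ N) (\<lambda>m. k * x m) = (\<lambda>m. 0)" using a(3) by (simp add: Topn_scale)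
  moreover have "\<forall>m\<ge>M. k * x m = 0" using a(2) by simp
  moreover have "van (\<lambda>m. k * x m)" using a(1) by (simp add: van_def)
  ultimately show ?thesis unfolding Kf_def mem_Collect_eq by (intro conjI exI)
qed

lemma Kf_zero: "(\<lambda>m. 0) \<in> Kf"
  unfolding Kf_def van_def using Topn_zero by auto

lemma Kf_sum: "finite F \<Longrightarrow> (\<And>i. i \<in> F \<Longrightarrow> u i \<in> Kf) \<Longrightarrow> (\<lambda>m. \<Sum>i\<in>F. u i m) \<in> Kf"
proof (induction F rule: finite_induct)
  case empty show ?case using Kf_zero by simp
next
  case (insert x F)
  then have "u x \<in> Kf" "(\<lambda>m. \<Sum>i\<in>F. u i m) \<in> Kf" by auto
  from Kf_add[OF this] insert(1,2) show ?case by simp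
qed

lemma ev_van: "3 \<le> a \<Longrightarrow> van (ev a)" unfolding van_def ev_def by auto

lemma orbit: assumes "3 \<le> a"
  shows "(Top ^^ n) (ev a) = (\<lambda>m. 0) \<or> ((Top ^^ n) (ev a) = ev ((collatzT ^^ n) a) \<and> 3 \<le> (collatzT ^^ n) a)"
proof (induction n)
  case 0 then show ?case using assms by simp
next
  case (Suc n)
  then show ?case
  proof
    assume "(Top ^^ n) (ev a) = (\<lambda>m. 0)" then show ?case by (simp add: Top_zero)
  next
    assume h: "(Top ^^ n) (ev a) = ev ((collatzT ^^ n) a) \<and> 3 \<le> (collatzT ^^ n) a"
    define x where "x = (collatzT ^^ n) a"
    have "(Top ^^ Suc n) (ev a) = Top (ev x)" using h x_def by simp
    also have "\<dots> = (if 3 \<le> collatzT x then ev (collatzT x) else (\<lambda>m. 0))"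
      using h x_def Top_ev by simp
    finally have e: "(Top ^^ Suc n) (ev a) = (if 3 \<le> collatzT x then ev (collatzT x) else (\<lambda>m. 0))" .
    have "(collatzT ^^ Suc n) a = collatzT x" using x_def by simp
    then show ?case using e by (cases "3 \<le> collatzT x") simp_all
  qed
qed

lemma ev_Sopn: "(Sop ^^ n) (ev a) = ev (2^n * a)"
proof
  fix j show "(Sop ^^ n) (ev a) j = ev (2^n * a) j"
  proof (cases "j = 2^n * a")
    case True then show ?thesis unfolding Sopn_formula ev_def by simp
  next
    case False
    have "\<not> (2^n dvd j \<and> j div 2^n = a)"
    proof
      assume "2^n dvd j \<and> j div 2^n = a"
      then have "j = 2^n * a" by (metis dvd_mult_div_cancel)
      with False show False by simp
    qed
    then show ?thesis unfolding Sopn_formula ev_def using False by auto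
  qed
qed

context W begin

lemma finset_supp:
  assumes "van c" "finite A" "\<And>m. m \<notin> A \<Longrightarrow> c m = 0"
  shows "c \<in> Xw \<omega> \<and> wnorm \<omega> c = sqrt (\<Sum>m\<in>A. (cmod (c m))^2 / \<omega> m)"
proof -
  have "(\<lambda>m. (cmod (c m))^2 / \<omega> m) sums (\<Sum>m\<in>A. (cmod (c m))^2 / \<omega> m)"
    by (rule sums_finite) (auto simp: assms)
  then show ?thesis using assms(1) unfolding Xw_def wnorm_def van_def by (auto simp: sums_iff)
qed

lemma wnorm_zero: "wnorm \<omega> (\<lambda>m. 0) = 0" by (simp add: wnorm_def)

lemma Kf_Xw: "x \<in> Kf \<Longrightarrow> x \<in> Xw \<omega>"
  unfolding Kf_def using finsupp by auto

lemma Sopn_fin: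
  assumes "van x" "\<And>m. M \<le> m \<Longrightarrow> x m = 0"
  shows "(Sop ^^ n) x \<in> Xw \<omega> \<and> wnorm \<omega> ((Sop ^^ n) x) = sqrt (\<Sum>a<M. (cmod (x a))^2 / \<omega> (a * 2^n))"
proof -
  let ?A = "(\<lambda>a. a * 2^n) ` {..<M}"
  have z: "(Sop ^^ n) x j = 0" if "j \<notin> ?A" for j
  proof (cases "2^n dvd j")
    case True
    then have "j = (j div 2^n) * 2^n" by simp
    then have "j div 2^n \<ge> M" using that by (metis imageI lessThan_iff not_le)
    then show ?thesis using True assms(2) by (simp add: Sopn_formula)
  qed (simp add: Sopn_formula)
  have "(Sop ^^ n) x \<in> Xw \<omega> \<and> wnorm \<omega> ((Sop ^^ n) x) = sqrt (\<Sum>j\<in>?A. (cmod ((Sop ^^ n) x j))^2 / \<omega> j)"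
    by (rule finset_supp) (auto simp: van_Sopn assms z)
  also have "(\<Sum>j\<in>?A. (cmod ((Sop ^^ n) x j))^2 / \<omega> j) = (\<Sum>a<M. (cmod (x a))^2 / \<omega> (a * 2^n))"
    by (subst sum.reindex) (auto simp: inj_on_def Sopn_formula)
  finally show ?thesis .
qed

lemma Sopn_tendsto:
  assumes "van x" "\<And>m. M \<le> m \<Longrightarrow> x m = 0"
  shows "(\<lambda>n. wnorm \<omega> ((Sop ^^ n) x)) \<longlonglongrightarrow> 0"
proof -
  have "(\<lambda>n. sqrt (\<Sum>a<M. (cmod (x a))^2 / \<omega> (a * 2^n))) \<longlonglongrightarrow> sqrt (\<Sum>a<M. 0)"
  proof (intro tendsto_intros)
    fix a
    show "(\<lambda>n. (cmod (x a))^2 / \<omega> (a * 2^n)) \<longlonglongrightarrow> 0"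
    proof (cases "3 \<le> a")
      case True
      have "(\<lambda>n. 1 / \<omega> (a * 2^n)) \<longlonglongrightarrow> 0" using sm[OF True] by (rule summable_LIMSEQ_zero)
      then have "(\<lambda>n. (cmod (x a))^2 * (1 / \<omega> (a * 2^n))) \<longlonglongrightarrow> (cmod (x a))^2 * 0"
        by (intro tendsto_intros)
      then show ?thesis by simp
    next
      case False then show ?thesis using assms(1) by (simp add: van_def)
    qed
  qed
  then show ?thesis using Sopn_fin[OF assms] by simp
qed

lemma ev_approx:
  assumes a: "3 \<le> a" and d: "0 < \<delta>"
  shows "\<exists>z\<in>Kf. wnorm \<omega> (ev a - z) < \<delta>"
proof (cases "\<exists>N. (Top ^^ N) (ev a) = (\<lambda>m. 0)")
  case True
  have "ev a \<in> Kf" unfolding Kf_def using True ev_van[OF a]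
    by (auto simp: ev_def intro!: exI[of _ "Suc a"])
  moreover have "ev a - ev a = (\<lambda>m. 0)" by (simp add: fun_diff_def)
  ultimately show ?thesis using d wnorm_zero by (intro bexI[of _ "ev a"]) simp_all
next
  case False
  then have orb: "(Top ^^ n) (ev a) = ev ((collatzT ^^ n) a) \<and> 3 \<le> (collatzT ^^ n) a" for n
    using orbit[OF a, of n] by auto
  define b where "b n = 2^n * (collatzT ^^ n) a" for n
  have b3: "3 \<le> b n" for n
  proof -
    have "(collatzT ^^ n) a \<le> b n" unfolding b_def by simp
    then show ?thesis using orb[of n] by linarith
  qed
  have bge: "2^n \<le> b n" for n using orb[of n] unfolding b_def by simp
  have Kb: "(\<lambda>m. ev a m - ev (b n) m) \<in> Kf" for n
  proof -
    have "(Top ^^ n) (ev (b n)) = (Top ^^ n) (ev a)"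
      using orb[of n] unfolding b_def ev_Sopn[symmetric]
      by (simp add: Topn_Sopn ev_van)
    moreover have "(Top ^^ n) (\<lambda>m. ev a m - ev (b n) m) = (\<lambda>m. (Top ^^ n) (ev a) m - (Top ^^ n) (ev (b n)) m)"
      using Topn_minus[of n "ev a" "ev (b n)"] by (simp add: fun_diff_def)
    ultimately have "(Top ^^ n) (\<lambda>m. ev a m - ev (b n) m) = (\<lambda>m. 0)" by simp
    moreover have "\<forall>m\<ge>Suc (a + b n). ev a m - ev (b n) m = 0" by (auto simp: ev_def)
    moreover have "van (\<lambda>m. ev a m - ev (b n) m)" using a b3[of n] by (auto simp: van_def ev_def)
    ultimately show ?thesis unfolding Kf_def by blast
  qed
  have inf: "infinite (range b)"
  proof
    assume "finite (range b)"
    then obtain K where "\<forall>x\<in>range b. x \<le> K" using finite_nat_set_iff_bounded_le by auto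
    then have "b K \<le> K" by auto
    moreover have "K < 2^K" by (rule less_exp)
    ultimately show False using bge[of K] by simp
  qed
  obtain M :: nat where M: "1 / (c0 * \<delta>^2) < M" using reals_Archimedean2 by blast
  have "0 < 1 / (c0 * \<delta>^2)" using c0 d by simp
  then have "0 < real M" using M by linarith
  then have M0: "0 < M" by simp
  obtain C where C: "C \<subseteq> range b" "finite C" "card C = M"
    using infinite_arbitrarily_large[OF inf] by blast
  have C3: "m \<in> C \<Longrightarrow> 3 \<le> m" for m using C(1) b3 by auto
  define z where "z = (\<lambda>m. \<Sum>c\<in>C. (1 / of_nat M) * (ev a m - ev c m))"
  have zK: "z \<in> Kf" unfolding z_def
  proof (rule Kf_sum[OF C(2)])
    fix c assume "c \<in> C"
    then obtain n where "c = b n" using C(1) by auto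
    then show "(\<lambda>m. (1 / of_nat M) * (ev a m - ev c m)) \<in> Kf" using Kf_mult[OF Kb[of n]] by (simp only:)
  qed
  have eq: "ev a - z = (\<lambda>m. if m \<in> C then 1 / of_nat M else 0)"
  proof
    fix m
    have "z m = (1 / of_nat M) * (\<Sum>c\<in>C. (ev a m - ev c m))"
      unfolding z_def by (rule sum_distrib_left[symmetric])
    also have "(\<Sum>c\<in>C. (ev a m - ev c m)) = of_nat M * ev a m - (\<Sum>c\<in>C. ev c m)"
      using C(3) by (simp add: sum_subtractf)
    also have "(1 / of_nat M) * (of_nat M * ev a m - (\<Sum>c\<in>C. ev c m)) = ev a m - (1 / of_nat M) * (\<Sum>c\<in>C. ev c m)"
      using M0 by (simp add: right_diff_distrib)
    finally have "z m = ev a m - (1 / of_nat M) * (\<Sum>c\<in>C. ev c m)" .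
    moreover have "(\<Sum>c\<in>C. ev c m) = (if m \<in> C then 1 else 0)"
      unfolding ev_def using C(2) by simp
    ultimately show "(ev a - z) m = (if m \<in> C then 1 / of_nat M else 0)" by simp
  qed
  have "wnorm \<omega> (ev a - z) = sqrt (\<Sum>m\<in>C. (cmod (if m \<in> C then 1 / of_nat M else 0 :: complex))^2 / \<omega> m)"
    unfolding eq by (rule conjunct2[OF finset_supp]) (auto simp: van_def C(2) dest: C3)
  also have "\<dots> = sqrt (\<Sum>m\<in>C. (1 / real M)^2 / \<omega> m)"
    by (intro arg_cong[where f = sqrt] sum.cong) (auto simp: norm_divide)
  also have "\<dots> \<le> sqrt (\<Sum>m\<in>C. (1 / real M)^2 / c0)"
  proof (intro real_sqrt_le_mono sum_mono divide_left_mono)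
    fix m assume "m \<in> C"
    then have "3 \<le> m" by (rule C3)
    then show "c0 \<le> \<omega> m" "0 < \<omega> m * c0" using lb[of m] pos[of m] c0 by auto
  qed simp
  also have "\<dots> = sqrt (1 / (real M * c0))" using C(3) M0 by (simp add: power2_eq_square)
  also have "\<dots> < \<delta>"
  proof -
    have "1 / (real M * c0) < \<delta>^2" using M M0 c0 d
      by (simp add: field_simps) 
    then have "sqrt (1 / (real M * c0)) < sqrt (\<delta>^2)" by (rule real_sqrt_less_mono)
    then show ?thesis using d by simp
  qed
  finally show ?thesis using zK by blast
qed


lemma wnorm_sym: "wnorm \<omega> (a - b) = wnorm \<omega> (b - a)"
  unfolding wnorm_def by (simp add: norm_minus_commute)

lemma tail:
  assumes g: "g \<in> Xw \<omega>" and e: "0 < e"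
  shows "\<exists>M. wnorm \<omega> (g - (\<lambda>m. if m < M then g m else 0)) < e"
proof -
  define f where "f m = (cmod (g m))^2 / \<omega> m" for m
  have sf: "summable f" using g unfolding Xw_def f_def by auto
  have f0: "0 \<le> f m" for m
    using g Xw_van[OF g] pos[of m] unfolding f_def van_def by (cases "m = 0") auto
  obtain M where M: "norm (\<Sum>i. f (i + M)) < e^2"
    using suminf_exist_split[OF _ sf, of "e^2"] e by auto
  define fh where "fh m = (if m < M then 0 else f m)" for m
  have fh_eq: "(\<lambda>m. (cmod ((g - (\<lambda>m. if m < M then g m else 0)) m))^2 / \<omega> m) = fh"
    unfolding fh_def f_def by (auto simp: fun_eq_iff)
  have sfh: "summable fh"
    by (rule summable_comparison_test'[OF sf, of 0]) (auto simp: fh_def f0)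
  have "suminf fh = (\<Sum>i. fh (i + M)) + sum fh {..<M}" by (rule suminf_split_initial_segment[OF sfh])
  also have "\<dots> = (\<Sum>i. f (i + M))" by (simp add: fh_def)
  finally have "suminf fh < e^2" using M by simp
  then have "sqrt (suminf fh) < sqrt (e^2)" by (rule real_sqrt_less_mono)
  moreover have "wnorm \<omega> (g - (\<lambda>m. if m < M then g m else 0)) = sqrt (suminf fh)"
    unfolding wnorm_def fh_eq ..
  ultimately show ?thesis using e by (intro exI[of _ M]) simp
qed

lemma decomp:
  assumes "van c" "\<And>m. M \<le> m \<Longrightarrow> c m = 0"
  shows "c = (\<lambda>m. \<Sum>a\<in>{3..<M}. c a * ev a m)"
proof
  fix m
  have "(\<Sum>a\<in>{3..<M}. c a * ev a m) = (if m \<in> {3..<M} then c m else 0)"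
  proof -
    have "(\<Sum>a\<in>{3..<M}. c a * ev a m) = (\<Sum>a\<in>{3..<M}. if m = a then c a else 0)"
      unfolding ev_def by (rule sum.cong) auto
    also have "\<dots> = (if m \<in> {3..<M} then c m else 0)" by (rule sum.delta') simp
    finally show ?thesis .
  qed
  then show "c m = (\<Sum>a\<in>{3..<M}. c a * ev a m)" using assms unfolding van_def by auto
qed

lemma ev_Xw: "3 \<le> a \<Longrightarrow> ev a \<in> Xw \<omega>"
  using finsupp[of "ev a" "Suc a"] ev_van by (auto simp: ev_def)

lemma Kf_dense:
  assumes g: "g \<in> Xw \<omega>" and e: "0 < e"
  shows "\<exists>x\<in>Kf. wnorm \<omega> (g - x) < e"
proof -
  obtain M where M: "wnorm \<omega> (g - (\<lambda>m. if m < M then g m else 0)) < e / 2"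
    using tail[OF g, of "e/2"] e by auto
  define gM where "gM = (\<lambda>m. if m < M then g m else 0)"
  define S where "S = (\<Sum>a\<in>{3..<M}. cmod (g a))"
  have S0: "0 \<le> S" unfolding S_def by (simp add: sum_nonneg)
  define \<delta> where "\<delta> = e / (2 * (S + 1))"
  have d0: "0 < \<delta>" unfolding \<delta>_def using e S0 by simp
  have "\<forall>a. \<exists>z. 3 \<le> a \<longrightarrow> z \<in> Kf \<and> wnorm \<omega> (ev a - z) < \<delta>"
    using ev_approx[OF _ d0] by blast
  then obtain z where z: "\<And>a. 3 \<le> a \<Longrightarrow> z a \<in> Kf \<and> wnorm \<omega> (ev a - z a) < \<delta>"
    using choice by metis
  define x where "x = (\<lambda>m. \<Sum>a\<in>{3..<M}. g a * z a m)"
  have xK: "x \<in> Kf" unfolding x_def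
    by (rule Kf_sum) (auto intro!: Kf_mult conjunct1[OF z])
  have vg: "van g" using Xw_van[OF g] .
  have "gM = (\<lambda>m. \<Sum>a\<in>{3..<M}. gM a * ev a m)"
    by (rule decomp) (use vg in \<open>auto simp: van_def gM_def\<close>)
  also have "\<dots> = (\<lambda>m. \<Sum>a\<in>{3..<M}. g a * ev a m)"
    by (auto simp: gM_def fun_eq_iff intro!: sum.cong)
  finally have gM_eq: "gM = (\<lambda>m. \<Sum>a\<in>{3..<M}. g a * ev a m)" .
  have gMX: "gM \<in> Xw \<omega>" unfolding gM_def using vg by (intro conjunct1[OF finsupp[of _ M]]) (auto simp: van_def)
  have diff: "gM - x = (\<lambda>m. \<Sum>a\<in>{3..<M}. g a * (ev a - z a) m)"
    unfolding gM_eq x_def by (simp add: fun_eq_iff sum_subtractf right_diff_distrib)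
  have memb: "(ev a - z a) \<in> Xw \<omega>" if "a \<in> {3..<M}" for a
    using that Xw_diff[OF ev_Xw Kf_Xw[OF conjunct1[OF z]]] by auto
  have "wnorm \<omega> (gM - x) \<le> (\<Sum>a\<in>{3..<M}. wnorm \<omega> (\<lambda>m. g a * (ev a - z a) m))"
    unfolding diff
  proof (rule conjunct2[OF Xw_sum])
    fix a assume "a \<in> {3..<M}"
    then show "(\<lambda>m. g a * (ev a - z a) m) \<in> Xw \<omega>" using Xw_mult[OF memb] by blast
  qed simp
  also have "\<dots> \<le> (\<Sum>a\<in>{3..<M}. cmod (g a) * \<delta>)"
  proof (rule sum_mono)
    fix a assume a: "a \<in> {3..<M}"
    have "wnorm \<omega> (\<lambda>m. g a * (ev a - z a) m) \<le> cmod (g a) * wnorm \<omega> (ev a - z a)"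
      using Xw_mult[OF memb[OF a]] by simp
    also have "\<dots> \<le> cmod (g a) * \<delta>" using z[of a] a by (intro mult_left_mono) auto
    finally show "wnorm \<omega> (\<lambda>m. g a * (ev a - z a) m) \<le> cmod (g a) * \<delta>" .
  qed
  also have "\<dots> = S * \<delta>" unfolding S_def by (simp add: sum_distrib_right)
  also have "\<dots> < e / 2"
  proof -
    have "S * \<delta> = e / 2 * (S / (S + 1))" unfolding \<delta>_def using S0 by (simp add: field_simps)
    also have "\<dots> < e / 2" using e S0 by (simp add: field_simps)
    finally show ?thesis .
  qed
  finally have "wnorm \<omega> (gM - x) < e / 2" .
  moreover have "wnorm \<omega> (g - x) \<le> wnorm \<omega> (g - gM) + wnorm \<omega> (gM - x)"
    by (rule Xw_diff3[OF g gMX Kf_Xw[OF xK]])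
  ultimately show ?thesis using M xK unfolding gM_def by force
qed

end

definition qvec :: "(rat \<times> rat) list \<Rightarrow> nat \<Rightarrow> complex" where
  "qvec L m = (if 3 \<le> m \<and> m < length L then Complex (of_rat (fst (L ! m))) (of_rat (snd (L ! m))) else 0)"

context W begin

lemma qvec_Xw: "qvec L \<in> Xw \<omega>"
  using finsupp[of "qvec L" "length L"] by (auto simp: qvec_def van_def)

lemma qvec_dense:
  assumes g: "g \<in> Xw \<omega>" and e: "0 < e"
  shows "\<exists>L. wnorm \<omega> (g - qvec L) < e"
proof -
  obtain M where M: "wnorm \<omega> (g - (\<lambda>m. if m < M then g m else 0)) < e / 2"
    using tail[OF g, of "e/2"] e by auto
  define gM where "gM = (\<lambda>m. if m < M then g m else 0)"
  have vg: "van g" using Xw_van[OF g] .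
  have gMX: "gM \<in> Xw \<omega>" unfolding gM_def using vg by (intro conjunct1[OF finsupp[of _ M]]) (auto simp: van_def)
  define \<delta> where "\<delta> = sqrt (c0 / (M + 1)) * e / 4"
  have d0: "0 < \<delta>" unfolding \<delta>_def using c0 e by simp
  have d2: "\<delta>^2 = c0 * e^2 / (16 * (M + 1))" unfolding \<delta>_def using c0
    by (simp add: power_mult_distrib power_divide)
  have "\<forall>x::real. \<exists>q. \<bar>of_rat q - x\<bar> < \<delta> / 2"
  proof
    fix x :: real
    obtain q where "q \<in> \<rat>" "x - \<delta>/2 < q" "q < x + \<delta>/2" using Rats_dense_in_real[of "x - \<delta>/2" "x + \<delta>/2"] d0 by auto
    then show "\<exists>q. \<bar>of_rat q - x\<bar> < \<delta> / 2" by (metis Rats_cases abs_diff_less_iff add.commute diff_less_eq less_diff_eq)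
  qed
  then obtain q where q: "\<And>x. \<bar>of_rat (q x) - x\<bar> < \<delta> / 2" using choice by metis
  define L where "L = map (\<lambda>m. (q (Re (g m)), q (Im (g m)))) [0..<M]"
  define d where "d = gM - qvec L"
  have dM: "d m = 0" if "M \<le> m" for m using that unfolding d_def gM_def qvec_def L_def by simp
  have vd: "van d" unfolding d_def gM_def qvec_def van_def using vg by (auto simp: van_def)
  have dm: "cmod (d m) \<le> \<delta>" for m
  proof (cases "3 \<le> m \<and> m < M")
    case True
    then have "d m = g m - Complex (of_rat (q (Re (g m)))) (of_rat (q (Im (g m))))"
      unfolding d_def gM_def qvec_def L_def by simp
    then have "cmod (d m) \<le> \<bar>Re (g m) - of_rat (q (Re (g m)))\<bar> + \<bar>Im (g m) - of_rat (q (Im (g m)))\<bar>"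
      using cmod_le[of "d m"] by simp
    also have "\<dots> \<le> \<delta>/2 + \<delta>/2" using q[of "Re (g m)"] q[of "Im (g m)"] by (simp add: abs_minus_commute)
    finally show ?thesis by simp
  next
    case False
    then have "d m = 0" using vd dM unfolding van_def by (cases "m < 3") auto
    then show ?thesis using d0 by simp
  qed
  have "wnorm \<omega> d = sqrt (\<Sum>m<M. (cmod (d m))^2 / \<omega> m)" using finsupp[OF vd dM] by simp
  also have "\<dots> \<le> sqrt (\<Sum>m<M. \<delta>^2 / c0)"
  proof (intro real_sqrt_le_mono sum_mono)
    fix m assume "m \<in> {..<M}"
    show "(cmod (d m))^2 / \<omega> m \<le> \<delta>^2 / c0"
    proof (cases "m = 0")
      case True then show ?thesis using vd c0 by (simp add: van_def)
    next
      case False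
      then have w: "c0 \<le> \<omega> m" "0 < \<omega> m" using lb pos by auto
      have "(cmod (d m))^2 \<le> \<delta>^2" using dm[of m] by (simp add: power_mono)
      then have "(cmod (d m))^2 / \<omega> m \<le> \<delta>^2 / \<omega> m" using w by (simp add: divide_right_mono)
      also have "\<dots> \<le> \<delta>^2 / c0" using w c0 by (intro divide_left_mono) auto
      finally show ?thesis .
    qed
  qed
  also have "\<dots> = sqrt (M * e^2 / (16 * (M + 1)))" using c0 d2 by simp
  also have "\<dots> < sqrt ((e/2)^2)"
  proof (rule real_sqrt_less_mono)
    have "M * e^2 / (16 * (M + 1)) \<le> e^2 / 16" using e by (simp add: field_simps)
    also have "\<dots> < (e/2)^2" using e by (simp add: power_divide)
    finally show "M * e^2 / (16 * (M + 1)) < (e/2)^2" .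
  qed
  also have "\<dots> = e / 2" using e by simp
  finally have "wnorm \<omega> d < e / 2" .
  moreover have "wnorm \<omega> (g - qvec L) \<le> wnorm \<omega> (g - gM) + wnorm \<omega> (gM - qvec L)"
    by (rule Xw_diff3[OF g gMX qvec_Xw])
  ultimately show ?thesis using M unfolding d_def gM_def by (intro exI[of _ L]) simp
qed


definition xs :: "nat \<Rightarrow> nat \<Rightarrow> complex" where
  "xs k = (SOME x. x \<in> Kf \<and> wnorm \<omega> (qvec (fst (from_nat k :: (rat \<times> rat) list \<times> nat)) - x)
              < 1 / real (Suc (snd (from_nat k :: (rat \<times> rat) list \<times> nat))))"

lemma xs_prop:
  "xs k \<in> Kf \<and> wnorm \<omega> (qvec (fst (from_nat k :: (rat \<times> rat) list \<times> nat)) - xs k)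
              < 1 / real (Suc (snd (from_nat k :: (rat \<times> rat) list \<times> nat)))"
proof -
  have "\<exists>x. x \<in> Kf \<and> wnorm \<omega> (qvec (fst (from_nat k :: (rat \<times> rat) list \<times> nat)) - x)
              < 1 / real (Suc (snd (from_nat k :: (rat \<times> rat) list \<times> nat)))"
    using Kf_dense[OF qvec_Xw, of "1 / real (Suc (snd (from_nat k :: (rat \<times> rat) list \<times> nat)))"
        "fst (from_nat k :: (rat \<times> rat) list \<times> nat)"] by auto
  then show ?thesis unfolding xs_def by (rule someI_ex)
qed

lemma xs_dense:
  assumes g: "g \<in> Xw \<omega>" and e: "0 < e"
  shows "\<exists>K\<ge>K0. wnorm \<omega> (g - xs K) < e"
proof -
  obtain L where L: "wnorm \<omega> (g - qvec L) < e / 2" using qvec_dense[OF g, of "e/2"] e by auto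
  obtain i0 :: nat where i0: "1 / (e/2) < i0" using reals_Archimedean2 by blast
  have i0': "1 / real (Suc i) < e / 2" if "i0 \<le> i" for i
  proof -
    have "0 < e/2" using e by simp
    then have "1 / (e/2) < real (Suc i)" using i0 that by linarith
    then show ?thesis using e by (simp add: field_simps)
  qed
  have inj: "inj_on (\<lambda>i. to_nat (L, i)) {i0..}"
    by (rule inj_onI) (metis Pair_inject from_nat_to_nat)
  have "infinite ((\<lambda>i. to_nat (L, i)) ` {i0..})"
    using finite_imageD[OF _ inj] infinite_Ici[of i0] by auto
  then obtain i where i: "i0 \<le> i" "K0 \<le> to_nat (L, i)"
    using finite_nat_set_iff_bounded[of "(\<lambda>i. to_nat (L, i)) ` {i0..}"] by (auto simp: not_less)
  define K where "K = to_nat (L, i)"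
  have fK: "from_nat K = (L, i)" unfolding K_def by simp
  have "wnorm \<omega> (qvec L - xs K) < 1 / real (Suc i)" using xs_prop[of K] fK by simp
  moreover have "wnorm \<omega> (g - xs K) \<le> wnorm \<omega> (g - qvec L) + wnorm \<omega> (qvec L - xs K)"
    by (rule Xw_diff3[OF g qvec_Xw Kf_Xw]) (use xs_prop in blast)
  ultimately have "wnorm \<omega> (g - xs K) < e" using L i0'[OF i(1)] by simp
  then show ?thesis using i(2) unfolding K_def by blast
qed


lemma P_norm:
  assumes a: "3 \<le> a" and N: "1 \<le> N" and \<eta>: "0 < \<eta>"
    and tl: "\<bar>\<Sum>i. 1 / \<omega> (a * 2 ^ (i + N))\<bar> < \<eta>^2"
  shows "(\<lambda>m. if \<exists>n. m = a * 2 ^ (Suc n * N) then 1 else 0 :: complex) \<in> Xw \<omega>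
       \<and> wnorm \<omega> (\<lambda>m. if \<exists>n. m = a * 2 ^ (Suc n * N) then 1 else 0 :: complex) \<le> \<eta>"
proof -
  define P where "P = (\<lambda>m. if \<exists>n. m = a * 2 ^ (Suc n * N) then 1 else 0 :: complex)"
  define p where "p m = (cmod (P m))^2 / \<omega> m" for m
  define h where "h n = a * 2 ^ (Suc n * N)" for n
  have hs: "strict_mono h" unfolding strict_mono_Suc_iff h_def using a N by simp
  have p_h: "p (h n) = 1 / \<omega> (a * 2 ^ (n * N + N))" for n
    unfolding p_def P_def h_def by (auto simp: add.commute)
  have p0: "p m = 0" if "m \<notin> range h" for m
    using that unfolding p_def P_def h_def by auto
  define u where "u j = 1 / \<omega> (a * 2 ^ (j + N))" for j
  have su: "summable u" unfolding u_def using summable_iff_shift[of "\<lambda>j. 1 / \<omega> (a * 2 ^ j)" N] sm[OF a] by simp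
  have u0: "0 \<le> u j" for j unfolding u_def using pos[of "a * 2 ^ (j + N)"] a by simp
  have inj: "inj (\<lambda>n::nat. n * N)" using N by (auto simp: inj_on_def)
  have seq: "(\<lambda>n. p (h n)) = u \<circ> (\<lambda>n. n * N)" unfolding p_h u_def by auto
  have ss: "summable (\<lambda>n. p (h n))" unfolding seq by (rule summable_reindex[OF su inj u0])
  have le: "(\<Sum>n. p (h n)) \<le> suminf u" unfolding seq by (rule suminf_reindex_mono[OF su inj u0])
  have "suminf u < \<eta>^2" using tl unfolding u_def by simp
  with le have lt: "(\<Sum>n. p (h n)) \<le> \<eta>^2" by simp
  have re: "(\<lambda>n. p (h n)) sums c \<longleftrightarrow> p sums c" for c
    by (rule sums_mono_reindex[OF hs]) (rule p0)
  have ps: "p sums (\<Sum>n. p (h n))"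
    using re[THEN iffD1, OF summable_sums[OF ss]] .
  have ak: "a \<le> a * 2 ^ k" for k :: nat by simp
  have vP: "van P" unfolding van_def P_def
  proof (intro allI impI)
    fix n :: nat assume n3: "n < 3"
    have "\<not> (\<exists>k. n = a * 2 ^ (Suc k * N))"
    proof
      assume "\<exists>k. n = a * 2 ^ (Suc k * N)"
      then obtain k where "n = a * 2 ^ (Suc k * N)" by blast
      then have "a \<le> n" using ak by simp
      then show False using a n3 by simp
    qed
    then show "(if \<exists>k. n = a * 2 ^ (Suc k * N) then 1 else 0) = 0" by simp
  qed
  have PX: "P \<in> Xw \<omega>" using ps vP unfolding Xw_def p_def van_def by (auto simp: sums_iff)
  have "wnorm \<omega> P = sqrt (\<Sum>n. p (h n))" using ps unfolding wnorm_def p_def by (simp add: sums_iff)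
  also have "\<dots> \<le> sqrt (\<eta>^2)" using lt by (rule real_sqrt_le_mono)
  also have "\<dots> = \<eta>" using \<eta> by simp
  finally show ?thesis using PX unfolding P_def by simp
qed


lemma periodic:
  assumes g: "g \<in> Xw \<omega>" and e: "0 < e"
  shows "\<exists>f\<in>Xw \<omega>. (\<exists>N\<ge>1. (Top ^^ N) f = f) \<and> wnorm \<omega> (f - g) < e"
proof -
  obtain y where yK: "y \<in> Kf" and yg: "wnorm \<omega> (g - y) < e / 2" using Kf_dense[OF g, of "e/2"] e by auto
  then obtain M N0 where vy: "van y" and yM: "\<And>m. M \<le> m \<Longrightarrow> y m = 0"
    and yN: "(Top ^^ N0) y = (\<lambda>m. 0)" unfolding Kf_def by auto
  define S where "S = (\<Sum>a\<in>{3..<M}. cmod (y a))"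
  have S0: "0 \<le> S" unfolding S_def by (simp add: sum_nonneg)
  define \<eta> where "\<eta> = e / (2 * (S + 1))"
  have \<eta>0: "0 < \<eta>" unfolding \<eta>_def using e S0 by simp
  have "\<forall>a. \<exists>Na. 3 \<le> a \<longrightarrow> (\<forall>n\<ge>Na. norm (\<Sum>i. 1 / \<omega> (a * 2 ^ (i + n))) < \<eta>^2)"
  proof
    fix a
    show "\<exists>Na. 3 \<le> a \<longrightarrow> (\<forall>n\<ge>Na. norm (\<Sum>i. 1 / \<omega> (a * 2 ^ (i + n))) < \<eta>^2)"
    proof (cases "3 \<le> a")
      case True
      show ?thesis using suminf_exist_split[OF _ sm[OF True], of "\<eta>^2"] \<eta>0 by auto
    qed simp
  qed
  then obtain Nf where Nf: "\<And>a n. 3 \<le> a \<Longrightarrow> Nf a \<le> n \<Longrightarrow> norm (\<Sum>i. 1 / \<omega> (a * 2 ^ (i + n))) < \<eta>^2"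
    using choice by metis
  define N where "N = Suc (N0 + (\<Sum>a\<in>{3..<M}. Nf a))"
  have N1: "1 \<le> N" and NN0: "N0 \<le> N" unfolding N_def by auto
  have NNf: "Nf a \<le> N" if "a \<in> {3..<M}" for a
  proof -
    have "Nf a \<le> (\<Sum>a\<in>{3..<M}. Nf a)" by (rule member_le_sum) (use that in auto)
    then show ?thesis unfolding N_def by simp
  qed
  define P where "P a = (\<lambda>m. if \<exists>n. m = a * 2 ^ (Suc n * N) then 1 else 0 :: complex)" for a :: nat
  define Q where "Q a = (\<lambda>m. if \<exists>n. m = a * 2 ^ (n * N) then 1 else 0 :: complex)" for a :: nat
  have PX: "P a \<in> Xw \<omega> \<and> wnorm \<omega> (P a) \<le> \<eta>" if "a \<in> {3..<M}" for a
    unfolding P_def using that Nf[of a N] NNf[OF that] by (intro P_norm N1 \<eta>0) auto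
  have QP: "Q a m = ev a m + P a m" if "3 \<le> a" for a m
  proof -
    have big: "a < a * 2 ^ (Suc n * N)" for n
    proof -
      have "1 < (2::nat) ^ (Suc n * N)" using N1 by (intro one_less_power) auto
      then show ?thesis using that by simp
    qed
    have iff: "(\<exists>n. m = a * 2 ^ (n * N)) \<longleftrightarrow> m = a \<or> (\<exists>n. m = a * 2 ^ (Suc n * N))"
    proof
      assume "\<exists>n. m = a * 2 ^ (n * N)"
      then obtain n where n: "m = a * 2 ^ (n * N)" by blast
      show "m = a \<or> (\<exists>n. m = a * 2 ^ (Suc n * N))"
      proof (cases n)
        case 0 then show ?thesis using n by simp
      next
        case (Suc k) then show ?thesis using n by blast
      qed
    next
      assume "m = a \<or> (\<exists>n. m = a * 2 ^ (Suc n * N))"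
      then show "\<exists>n. m = a * 2 ^ (n * N)"
      proof
        assume "m = a" then show ?thesis by (intro exI[of _ 0]) simp
      qed blast
    qed
    show ?thesis
    proof (cases "m = a")
      case True
      then have "\<not> (\<exists>n. m = a * 2 ^ (Suc n * N))" using big by (metis less_irrefl)
      then show ?thesis unfolding Q_def P_def ev_def using True iff by simp
    next
      case False then show ?thesis unfolding Q_def P_def ev_def using iff by simp
    qed
  qed
  have SQ: "(if 2^N dvd j then Q a (j div 2^N) else 0) = P a j" for a j
  proof -
    have "(2^N dvd j \<and> (\<exists>n. j div 2^N = a * 2 ^ (n * N))) \<longleftrightarrow> (\<exists>n. j = a * 2 ^ (Suc n * N))"
    proof
      assume "2^N dvd j \<and> (\<exists>n. j div 2^N = a * 2 ^ (n * N))"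
      then obtain n where "2^N dvd j" "j div 2^N = a * 2 ^ (n * N)" by blast
      then have "j = 2^N * (a * 2 ^ (n * N))" by (metis dvd_mult_div_cancel)
      then have "j = a * 2 ^ (Suc n * N)" by (simp add: power_add mult.commute mult.left_commute)
      then show "\<exists>n. j = a * 2 ^ (Suc n * N)" by blast
    next
      assume "\<exists>n. j = a * 2 ^ (Suc n * N)"
      then obtain n where n: "j = a * 2 ^ (Suc n * N)" by blast
      then have j: "j = 2^N * (a * 2 ^ (n * N))" by (simp add: power_add mult.commute mult.left_commute)
      then have "2^N dvd j" by simp
      moreover have "j div 2^N = a * 2 ^ (n * N)" using j by simp
      ultimately show "2^N dvd j \<and> (\<exists>n. j div 2^N = a * 2 ^ (n * N))" by blast
    qed
    then show ?thesis unfolding Q_def P_def by auto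
  qed
  define f where "f = (\<lambda>m. \<Sum>a\<in>{3..<M}. y a * Q a m)"
  define W where "W = (\<lambda>m. \<Sum>a\<in>{3..<M}. y a * P a m)"
  have y_eq: "y = (\<lambda>m. \<Sum>a\<in>{3..<M}. y a * ev a m)" by (rule decomp[OF vy yM])
  have fyW: "f = (\<lambda>m. y m + W m)"
  proof
    fix m
    have "f m = (\<Sum>a\<in>{3..<M}. y a * ev a m + y a * P a m)"
      unfolding f_def by (rule sum.cong) (auto simp: QP distrib_left)
    also have "\<dots> = (\<Sum>a\<in>{3..<M}. y a * ev a m) + W m" unfolding W_def by (simp add: sum.distrib)
    also have "(\<Sum>a\<in>{3..<M}. y a * ev a m) = y m" by (subst y_eq) simp
    finally show "f m = y m + W m" .
  qed
  have SfW: "(Sop ^^ N) f = W"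
  proof
    fix j
    have "(Sop ^^ N) f j = (\<Sum>a\<in>{3..<M}. y a * (if 2^N dvd j then Q a (j div 2^N) else 0))"
      unfolding Sopn_formula f_def by (simp add: sum_distrib_left[symmetric])
    also have "\<dots> = W j" unfolding W_def SQ ..
    finally show "(Sop ^^ N) f j = W j" .
  qed
  have WX: "W \<in> Xw \<omega> \<and> wnorm \<omega> W \<le> (\<Sum>a\<in>{3..<M}. wnorm \<omega> (\<lambda>m. y a * P a m))"
    unfolding W_def by (rule Xw_sum) (use PX Xw_mult in blast)+
  have "(\<Sum>a\<in>{3..<M}. wnorm \<omega> (\<lambda>m. y a * P a m)) \<le> (\<Sum>a\<in>{3..<M}. cmod (y a) * \<eta>)"
  proof (rule sum_mono)
    fix a assume a: "a \<in> {3..<M}"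
    have "wnorm \<omega> (\<lambda>m. y a * P a m) \<le> cmod (y a) * wnorm \<omega> (P a)" using Xw_mult PX[OF a] by blast
    also have "\<dots> \<le> cmod (y a) * \<eta>" using PX[OF a] by (intro mult_left_mono) auto
    finally show "wnorm \<omega> (\<lambda>m. y a * P a m) \<le> cmod (y a) * \<eta>" .
  qed
  also have "\<dots> = S * \<eta>" unfolding S_def by (simp add: sum_distrib_right)
  also have "\<dots> < e / 2"
  proof -
    have "S * \<eta> = e / 2 * (S / (S + 1))" unfolding \<eta>_def using S0 by (simp add: field_simps)
    also have "\<dots> < e / 2" using e S0 by (simp add: field_simps)
    finally show ?thesis .
  qed
  finally have Wn: "wnorm \<omega> W < e / 2" using WX by linarith
  have yX: "y \<in> Xw \<omega>" by (rule Kf_Xw[OF yK])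
  have fX: "f \<in> Xw \<omega>" unfolding fyW using Xw_add[OF yX conjunct1[OF WX]] by blast
  have vf: "van f" using Xw_van[OF fX] .
  have per: "(Top ^^ N) f = f"
  proof -
    have "(Top ^^ N) f = (Top ^^ N) (\<lambda>m. y m + (Sop ^^ N) f m)" using fyW SfW by simp
    also have "\<dots> = (\<lambda>m. (Top ^^ N) y m + (Top ^^ N) ((Sop ^^ N) f) m)" by (rule Topn_add)
    also have "(Top ^^ N) y = (\<lambda>m. 0)" by (rule Topn_zero_mono[OF yN NN0])
    also have "(Top ^^ N) ((Sop ^^ N) f) = f" by (rule Topn_Sopn[OF vf])
    finally show ?thesis by simp
  qed
  have fy: "f - y = W" unfolding fyW by (simp add: fun_eq_iff)
  have "wnorm \<omega> (f - g) \<le> wnorm \<omega> (f - y) + wnorm \<omega> (y - g)" by (rule Xw_diff3[OF fX yX g])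
  also have "\<dots> < e" using Wn yg unfolding fy wnorm_sym[of y g] by simp
  finally show ?thesis using fX per N1 by blast
qed


lemma geo_tail: "(\<lambda>k. if K < k then (1/2::real)^k else 0) sums ((1/2)^K)"
proof -
  define B where "B k = (if K < k then (1/2::real)^k else 0)" for k
  have "(\<lambda>i. (1/2::real)^i) sums 2" using geometric_sums[of "1/2::real"] by simp
  then have "(\<lambda>i. (1/2::real)^Suc K * (1/2)^i) sums ((1/2)^Suc K * 2)" by (rule sums_mult)
  moreover have "(\<lambda>i. B (i + Suc K)) = (\<lambda>i. (1/2::real)^Suc K * (1/2)^i)"
    unfolding B_def by (auto simp: fun_eq_iff power_add mult.commute)
  ultimately have "(\<lambda>i. B (i + Suc K)) sums ((1/2)^K)" by simp
  moreover have "sum B {..<Suc K} = 0" unfolding B_def by simp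
  ultimately show ?thesis using sums_iff_shift[of B "Suc K" "(1/2)^K"] unfolding B_def by simp
qed

lemma hyper: "\<exists>f\<in>Xw \<omega>. \<forall>g\<in>Xw \<omega>. \<forall>e>0. \<exists>n. wnorm \<omega> ((Top ^^ n) f - g) < e"
proof -
  have xK: "xs k \<in> Kf" for k using xs_prop by blast
  have "\<forall>k. \<exists>N. (Top ^^ N) (xs k) = (\<lambda>m. 0)" using xK unfolding Kf_def by blast
  then obtain Nk where Nk: "\<And>k. (Top ^^ Nk k) (xs k) = (\<lambda>m. 0)" using choice by metis
  have "\<forall>k. \<exists>M. \<forall>m\<ge>M. xs k m = 0" using xK unfolding Kf_def by blast
  then obtain Mk where Mk: "\<And>k m. Mk k \<le> m \<Longrightarrow> xs k m = 0" using choice by metis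
  have vx: "van (xs k)" for k using xK unfolding Kf_def by blast
  have "\<forall>k. \<exists>dk. \<forall>m\<ge>dk. wnorm \<omega> ((Sop ^^ m) (xs k)) < (1/2)^k"
  proof
    fix k
    have "(\<lambda>n. wnorm \<omega> ((Sop ^^ n) (xs k))) \<longlonglongrightarrow> 0" by (rule Sopn_tendsto[OF vx Mk])
    then obtain no where "\<forall>n\<ge>no. norm (wnorm \<omega> ((Sop ^^ n) (xs k)) - 0) < (1/2)^k"
      unfolding LIMSEQ_iff by (metis zero_less_divide_1_iff zero_less_numeral zero_less_power)
    then show "\<exists>dk. \<forall>m\<ge>dk. wnorm \<omega> ((Sop ^^ m) (xs k)) < (1/2)^k"
      by (intro exI[of _ no]) (auto simp: abs_less_iff)
  qed
  then obtain d where d: "\<And>k m. d k \<le> m \<Longrightarrow> wnorm \<omega> ((Sop ^^ m) (xs k)) < (1/2)^k"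
    using choice by metis
  define nn where "nn = rec_nat (d 0) (\<lambda>k r. r + Nk k + d (Suc k) + 1)"
  have nn0: "nn 0 = d 0" and nnS: "nn (Suc k) = nn k + Nk k + d (Suc k) + 1" for k
    unfolding nn_def by simp_all
  have nmono: "k \<le> K \<Longrightarrow> nn k \<le> nn K" for k K
    by (rule lift_Suc_mono_le[of nn]) (simp_all add: nnS)
  have P1: "nn k + Nk k \<le> nn K" if "k < K" for k K
  proof -
    have "nn (Suc k) \<le> nn K" using that by (intro nmono) simp
    then show ?thesis using nnS[of k] by simp
  qed
  have P2: "nn K + d k \<le> nn k" if "K < k" for k K
  proof -
    have "0 < k" using that by simp
    then obtain k' where k': "k = Suc k'" using gr0_implies_Suc by auto
    have "nn K \<le> nn k'" using that k' by (intro nmono) simp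
    then show ?thesis using nnS[of k'] k' by simp
  qed
  have P3: "d k \<le> nn k" for k by (cases k) (simp_all add: nn0 nnS)
  define u where "u k = (Sop ^^ nn k) (xs k)" for k
  have uX: "u k \<in> Xw \<omega>" for k unfolding u_def using Sopn_fin[OF vx Mk] by blast
  have un: "wnorm \<omega> (u k) \<le> (1/2)^k" for k unfolding u_def using d[OF P3[of k]] by simp
  have su: "summable (\<lambda>k. wnorm \<omega> (u k))"
  proof (rule summable_comparison_test)
    show "\<exists>N. \<forall>n\<ge>N. norm (wnorm \<omega> (u n)) \<le> (1/2)^n" using un wnorm_nonneg[OF uX] by auto
    show "summable (\<lambda>n. (1/2::real)^n)" by (rule summable_geometric) simp
  qed
  note FS = Xw_suminf[OF uX su]
  define F where "F = (\<lambda>m. \<Sum>k. u k m)"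
  have FX: "F \<in> Xw \<omega>" using FS unfolding F_def by blast
  have ps: "\<And>m. summable (\<lambda>k. u k m)" using FS by blast
  show ?thesis
  proof (intro bexI[OF _ FX] ballI allI impI)
    fix g e assume g: "g \<in> Xw \<omega>" and e: "(0::real) < e"
    obtain K0 where K0: "(1/2::real)^K0 < e/2" using real_arch_pow_inv[of "e/2" "1/2::real"] e by auto
    obtain K where K: "K0 \<le> K" "wnorm \<omega> (g - xs K) < e/2" using xs_dense[OF g, of "e/2" K0] e by auto
    define w where "w k = (if K < k then (Sop ^^ (nn k - nn K)) (xs k) else (\<lambda>m. 0))" for k
    have vk: "(Top ^^ nn K) (u k) m = (if k = K then xs K m else 0) + w k m" for k m
    proof (cases "k < K")
      case True
      have "(Top ^^ nn K) (u k) = (Top ^^ (nn K - nn k)) (xs k)"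
        unfolding u_def using True by (intro Topn_Sopn_le vx nmono) simp
      also have "\<dots> = (\<lambda>m. 0)" by (rule Topn_zero_mono[OF Nk]) (use P1[OF True] in simp)
      finally show ?thesis using True unfolding w_def by simp
    next
      case False
      show ?thesis
      proof (cases "k = K")
        case True
        then show ?thesis unfolding u_def w_def using Topn_Sopn[OF vx] by simp
      next
        case False
        then have Kk: "K < k" using \<open>\<not> k < K\<close> by simp
        have "(Top ^^ nn K) (u k) = (Sop ^^ (nn k - nn K)) (xs k)"
          unfolding u_def using Kk by (intro Topn_Sopn_ge vx nmono) simp
        then show ?thesis unfolding w_def using Kk by simp
      qed
    qed
    have wX: "w k \<in> Xw \<omega> \<and> wnorm \<omega> (w k) \<le> (if K < k then (1/2)^k else 0)" for k
    proof (cases "K < k")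
      case True
      have "d k \<le> nn k - nn K" using P2[OF True] by simp
      then have "wnorm \<omega> ((Sop ^^ (nn k - nn K)) (xs k)) < (1/2)^k" by (rule d)
      then show ?thesis unfolding w_def using True Sopn_fin[OF vx Mk] by auto
    next
      case False
      have "(\<lambda>m. 0::complex) \<in> Xw \<omega>" by (simp add: Xw_def)
      then show ?thesis unfolding w_def using False wnorm_zero by simp
    qed
    have gt: "(\<lambda>k. if K < k then (1/2::real)^k else 0) sums ((1/2)^K)" by (rule geo_tail)
    have sw: "summable (\<lambda>k. wnorm \<omega> (w k))"
    proof (rule summable_comparison_test)
      show "\<exists>N. \<forall>n\<ge>N. norm (wnorm \<omega> (w n)) \<le> (if K < n then (1/2::real)^n else 0)"
        using wX wnorm_nonneg by auto
      show "summable (\<lambda>n. if K < n then (1/2::real)^n else 0)" using gt by (rule sums_summable)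
    qed
    note WS = Xw_suminf[OF conjunct1[OF wX] sw]
    define Wf where "Wf = (\<lambda>m. \<Sum>k. w k m)"
    have WfX: "Wf \<in> Xw \<omega>" using WS unfolding Wf_def by blast
    have "wnorm \<omega> Wf \<le> (\<Sum>k. wnorm \<omega> (w k))" using WS unfolding Wf_def by blast
    also have "\<dots> \<le> (\<Sum>k. if K < k then (1/2::real)^k else 0)"
      by (rule suminf_le[OF _ sw sums_summable[OF gt]]) (use wX in blast)
    also have "\<dots> = (1/2)^K" using gt by (simp add: sums_iff)
    also have "\<dots> \<le> (1/2)^K0" using K(1) by (simp add: power_decreasing)
    finally have Wn: "wnorm \<omega> Wf < e/2" using K0 by simp
    have T: "(Top ^^ nn K) F = (\<lambda>m. xs K m + Wf m)"
    proof
      fix m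
      have "(Top ^^ nn K) F m = (\<Sum>k. (Top ^^ nn K) (u k) m)"
        using Topn_suminf[OF ps, of "nn K"] unfolding F_def by simp
      also have "\<dots> = (\<Sum>k. (if k = K then xs K m else 0) + w k m)" by (simp only: vk)
      also have "\<dots> = (\<Sum>k. (if k = K then xs K m else 0)) + Wf m"
        unfolding Wf_def
        by (rule suminf_add[symmetric]) (use sums_summable[OF sums_single[of K "\<lambda>_. xs K m"]] WS in auto)
      also have "(\<Sum>k. (if k = K then xs K m else 0)) = xs K m"
        using sums_unique[OF sums_single[of K "\<lambda>_. xs K m"]] by simp
      finally show "(Top ^^ nn K) F m = xs K m + Wf m" .
    qed
    have xKX: "xs K \<in> Xw \<omega>" by (rule Kf_Xw[OF xK])
    have aX: "xs K - g \<in> Xw \<omega>" using Xw_diff[OF xKX g] by blast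
    have "wnorm \<omega> ((Top ^^ nn K) F - g) \<le> wnorm \<omega> (xs K - g) + wnorm \<omega> Wf"
    proof (rule conjunct2[OF tri[OF aX WfX]])
      show "van ((Top ^^ nn K) F - g)" unfolding T using vx[of K] Xw_van[OF WfX] Xw_van[OF g]
        by (simp add: van_def)
      fix n show "cmod (((Top ^^ nn K) F - g) n) \<le> cmod ((xs K - g) n) + cmod (Wf n)"
      proof -
        have "xs K n + Wf n - g n = (xs K n - g n) + Wf n" by simp
        then show ?thesis unfolding T using norm_triangle_ineq[of "xs K n - g n" "Wf n"] by (simp only: fun_diff_def)
      qed
    qed
    also have "\<dots> < e" using K(2) Wn wnorm_sym[of "xs K" g] by simp
    finally show "\<exists>n. wnorm \<omega> ((Top ^^ n) F - g) < e" by blast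
  qed
qed

lemma chaotic: "chaotic \<omega>"
  unfolding chaotic_def hypercyclic_def periodic_points_dense_def using hyper periodic by blast

end


theorem theorem3p18:
  shows "(\<forall>\<omega> :: nat \<Rightarrow> real.
            (\<forall>n\<ge>1. \<omega> n > 0)
          \<and> (\<exists>c>0. \<forall>n\<ge>1. c \<le> \<omega> n)
          \<and> (\<forall>k\<ge>3. summable (\<lambda>n. 1 / \<omega> (k * 2 ^ n)))
          \<and> Top_bounded \<omega>
          \<longrightarrow> chaotic \<omega>)
         \<and> chaotic omega0"
proof
  show "\<forall>\<omega> :: nat \<Rightarrow> real.
            (\<forall>n\<ge>1. \<omega> n > 0)
          \<and> (\<exists>c>0. \<forall>n\<ge>1. c \<le> \<omega> n)
          \<and> (\<forall>k\<ge>3. summable (\<lambda>n. 1 / \<omega> (k * 2 ^ n)))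
          \<and> Top_bounded \<omega>
          \<longrightarrow> chaotic \<omega>"
  proof (intro allI impI)
    fix \<omega> :: "nat \<Rightarrow> real"
    assume h: "(\<forall>n\<ge>1. \<omega> n > 0) \<and> (\<exists>c>0. \<forall>n\<ge>1. c \<le> \<omega> n)
          \<and> (\<forall>k\<ge>3. summable (\<lambda>n. 1 / \<omega> (k * 2 ^ n))) \<and> Top_bounded \<omega>"
    then obtain c where c: "c > 0" "\<forall>n\<ge>1. c \<le> \<omega> n" by blast
    interpret W \<omega> c using h c by unfold_locales auto
    show "chaotic \<omega>" by (rule chaotic)
  qed
  show "chaotic omega0"
  proof -
    interpret W omega0 "1 / pi"
    proof
      fix n :: nat assume "1 \<le> n"
      show "0 < omega0 n" unfolding omega0_def by simp
      show "1 / pi \<le> omega0 n" unfolding omega0_def by (intro divide_right_mono) auto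
    next
      show "0 < 1 / pi" by simp
    next
      fix k :: nat assume k: "3 \<le> k"
      show "summable (\<lambda>n. 1 / omega0 (k * 2 ^ n))"
      proof (rule summable_comparison_test)
        show "summable (\<lambda>n. pi * (1/2::real)^n)" by (intro summable_mult summable_geometric) simp
        show "\<exists>N. \<forall>n\<ge>N. norm (1 / omega0 (k * 2 ^ n)) \<le> pi * (1/2)^n"
        proof (intro exI allI impI)
          fix n :: nat
          have "(2::real)^n \<le> real k * 2^n" using k by simp
          moreover have "real (k * 2^n) = real k * 2^n" by simp
          ultimately have "(2::real)^n \<le> real (k * 2^n) + 1" by linarith
          moreover have "1 / omega0 (k * 2 ^ n) = pi / (real (k * 2^n) + 1)"
            unfolding omega0_def by simp
          ultimately have "1 / omega0 (k * 2 ^ n) \<le> pi / 2^n"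
            by (simp add: frac_le)
          moreover have "0 \<le> 1 / omega0 (k * 2 ^ n)" unfolding omega0_def by simp
          ultimately show "norm (1 / omega0 (k * 2 ^ n)) \<le> pi * (1/2)^n"
            by (simp add: power_divide)
        qed
      qed
    qed
    show ?thesis by (rule chaotic)
  qed
qed

end
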